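(* Let $(E,\mathcal{E},\nu)$ be a $\sigma$-finite measure space, $\phi$ a Young function satisfying the $\Delta_2$-condition, $w$ a weight function, and $\Psi:E\to E$ a non-singular measurable transformation such that the composition operator $C_\Psi f=f\circ\Psi$ is a bounded linear operator on the Orlicz-Lorentz space $L_{(\phi,w)}$. If $\Psi$ is pre-positive, then $\mathcal{A}(C_\Psi)=0$.
   Context: A Young function is a convex $\phi:[0,\infty)\to[0,\infty)$ with $\phi(x)=0\iff x=0$ and $\lim_{x\to\infty}\phi(x)=\infty$; $\Delta_2$-condition: $\phi(2x)\le k\phi(x)$ for some $k>0$ and all $x>0$. A weight function is a non-increasing locally integrable $w:(0,\infty)\to(0,\infty)$ with $\int_0^\infty w=\infty$. For measurable $f$, $\nu_f(s)=\nu\{|f|>s\}$, $f^*(t)=\inf\{s>0:\nu_f(s)\le t\}$; $L_{(\phi,w)}$ is the space of measurable $f:E\to\mathbb{C}$ with $\int_0^\infty\phi(\alpha f^*(t))w(t)\,dt<\infty$ for some $\alpha>0$, with the Luxemburg norm. $\Psi$ non-singular: $\nu(\Psi^{-1}(S))=0$ whenever $\nu(S)=0$. $\Psi$ is pre-positive if $\nu(\Psi^{-1}(A))>0$ whenever $\nu(A)>0$. The ascent $\mathcal{A}(T)$ is the smallest non-negative integer $m$ with $\mathcal{N}(T^m)=\mathcal{N}(T^{m+1})$ ($\mathcal{N}$ = kernel, $T^0=I$), and $\infty$ if none exists. *)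

theory Defs
  imports "HOL-Analysis.Analysis"
begin

definition young_function :: "(real \<Rightarrow> real) \<Rightarrow> bool" where
  "young_function \<phi> \<longleftrightarrow>
     convex_on {0..} \<phi> \<and> (\<forall>x\<ge>0. \<phi> x \<ge> 0) \<and> (\<forall>x\<ge>0. \<phi> x = 0 \<longleftrightarrow> x = 0)
     \<and> filterlim \<phi> at_top at_top"

definition delta2 :: "(real \<Rightarrow> real) \<Rightarrow> bool" where
  "delta2 \<phi> \<longleftrightarrow> (\<exists>k>0. \<forall>x>0. \<phi> (2 * x) \<le> k * \<phi> x)"

text \<open>Weight function on (0,infinity); values at t <= 0 are irrelevant.\<close>
definition weight_function :: "(real \<Rightarrow> real) \<Rightarrow> bool" where
  "weight_function w \<longleftrightarrow>
     (\<forall>s t. 0 < s \<and> s \<le> t \<longrightarrow> w t \<le> w s) \<and> (\<forall>t>0. w t > 0)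
     \<and> (\<forall>a b. 0 < a \<longrightarrow> set_integrable lborel {a..b} w)
     \<and> (\<integral>\<^sup>+ t\<in>{0<..}. ennreal (w t) \<partial>lborel) = \<infinity>"

definition dist_fun :: "'a measure \<Rightarrow> ('a \<Rightarrow> complex) \<Rightarrow> real \<Rightarrow> ennreal" where
  "dist_fun M f s = emeasure M {x \<in> space M. s < cmod (f x)}"

text \<open>Decreasing rearrangement, with value infinity when the defining set is empty.\<close>
definition decr_rearr :: "'a measure \<Rightarrow> ('a \<Rightarrow> complex) \<Rightarrow> real \<Rightarrow> ennreal" where
  "decr_rearr M f t = Inf {ennreal s | s. 0 < s \<and> dist_fun M f s \<le> ennreal t}"

definition phi_enn :: "(real \<Rightarrow> real) \<Rightarrow> ennreal \<Rightarrow> ennreal" where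
  "phi_enn \<phi> x = (if x = \<infinity> then \<infinity> else ennreal (\<phi> (enn2real x)))"

definition ol_modular ::
  "(real \<Rightarrow> real) \<Rightarrow> (real \<Rightarrow> real) \<Rightarrow> 'a measure \<Rightarrow> ('a \<Rightarrow> complex) \<Rightarrow> real \<Rightarrow> ennreal" where
  "ol_modular \<phi> w M f \<alpha> =
     (\<integral>\<^sup>+ t\<in>{0<..}. phi_enn \<phi> (ennreal \<alpha> * decr_rearr M f t) * ennreal (w t) \<partial>lborel)"

definition OL_space ::
  "(real \<Rightarrow> real) \<Rightarrow> (real \<Rightarrow> real) \<Rightarrow> 'a measure \<Rightarrow> ('a \<Rightarrow> complex) set" where
  "OL_space \<phi> w M = {f \<in> borel_measurable M. \<exists>\<alpha>>0. ol_modular \<phi> w M f \<alpha> < \<infinity>}"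

definition lux_norm ::
  "(real \<Rightarrow> real) \<Rightarrow> (real \<Rightarrow> real) \<Rightarrow> 'a measure \<Rightarrow> ('a \<Rightarrow> complex) \<Rightarrow> real" where
  "lux_norm \<phi> w M f = Inf {l::real. 0 < l \<and> ol_modular \<phi> w M f (1 / l) \<le> 1}"

definition non_singular :: "'a measure \<Rightarrow> ('a \<Rightarrow> 'a) \<Rightarrow> bool" where
  "non_singular M \<Psi> \<longleftrightarrow>
     (\<forall>S\<in>sets M. emeasure M S = 0 \<longrightarrow> emeasure M (\<Psi> -` S \<inter> space M) = 0)"

definition pre_positive :: "'a measure \<Rightarrow> ('a \<Rightarrow> 'a) \<Rightarrow> bool" where
  "pre_positive M \<Psi> \<longleftrightarrow>
     (\<forall>A\<in>sets M. emeasure M A > 0 \<longrightarrow> emeasure M (\<Psi> -` A \<inter> space M) > 0)"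

text \<open>Bounded composition operator on the Orlicz-Lorentz space (linearity is automatic).\<close>
definition bounded_comp_op ::
  "(real \<Rightarrow> real) \<Rightarrow> (real \<Rightarrow> real) \<Rightarrow> 'a measure \<Rightarrow> ('a \<Rightarrow> 'a) \<Rightarrow> bool" where
  "bounded_comp_op \<phi> w M \<Psi> \<longleftrightarrow>
     (\<forall>f\<in>OL_space \<phi> w M. f \<circ> \<Psi> \<in> OL_space \<phi> w M) \<and>
     (\<exists>C. \<forall>f\<in>OL_space \<phi> w M. lux_norm \<phi> w M (f \<circ> \<Psi>) \<le> C * lux_norm \<phi> w M f)"

text \<open>Kernel of T^m on the space V, where elements are identified modulo the
  "zero" predicate Z (a.e. vanishing).\<close>
definition kernel_pow :: "'f set \<Rightarrow> ('f \<Rightarrow> bool) \<Rightarrow> ('f \<Rightarrow> 'f) \<Rightarrow> nat \<Rightarrow> 'f set" where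
  "kernel_pow V Z T m = {f \<in> V. Z ((T ^^ m) f)}"

definition ascent :: "'f set \<Rightarrow> ('f \<Rightarrow> bool) \<Rightarrow> ('f \<Rightarrow> 'f) \<Rightarrow> enat" where
  "ascent V Z T =
     (if \<exists>m. kernel_pow V Z T m = kernel_pow V Z T (Suc m)
      then enat (LEAST m. kernel_pow V Z T m = kernel_pow V Z T (Suc m)) else \<infinity>)"

end

theory Submission
  imports Defs
begin

theorem theorem3p7:
  fixes M :: "'a measure" and \<phi> w :: "real \<Rightarrow> real" and \<Psi> :: "'a \<Rightarrow> 'a"
  assumes "sigma_finite_measure M"
    and "young_function \<phi>" and "delta2 \<phi>"
    and "weight_function w"
    and "\<Psi> \<in> M \<rightarrow>\<^sub>M M"
    and "non_singular M \<Psi>"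
    and "bounded_comp_op \<phi> w M \<Psi>"
    and "pre_positive M \<Psi>"
  shows "ascent (OL_space \<phi> w M) (\<lambda>f. AE x in M. f x = 0) (\<lambda>f. f \<circ> \<Psi>) = 0"
proof -
  have key: "(AE x in M. f x = 0) \<longleftrightarrow> (AE x in M. f (\<Psi> x) = 0)"
    if f: "f \<in> borel_measurable M" for f :: "'a \<Rightarrow> complex"
  proof -
    define S where "S = {x \<in> space M. f x \<noteq> 0}"
    have S: "S \<in> sets M" unfolding S_def using f by measurable
    have pre: "\<Psi> -` S \<inter> space M = {x \<in> space M. f (\<Psi> x) \<noteq> 0}"
      using assms(5) unfolding S_def by (auto simp: measurable_def)
    have preS: "\<Psi> -` S \<inter> space M \<in> sets M"
      using assms(5) S by (simp add: measurable_sets)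
    have e1: "(AE x in M. f x = 0) \<longleftrightarrow> emeasure M S = 0"
      unfolding S_def by (rule AE_iff_measurable[OF _ refl]) (use S S_def in auto)
    have e2: "(AE x in M. f (\<Psi> x) = 0) \<longleftrightarrow> emeasure M (\<Psi> -` S \<inter> space M) = 0"
      unfolding pre by (rule AE_iff_measurable[OF _ refl]) (use preS pre in auto)
    show ?thesis unfolding e1 e2
      using assms(6,8) S unfolding non_singular_def pre_positive_def
      by (metis not_gr_zero)
  qed
  have eq: "kernel_pow (OL_space \<phi> w M) (\<lambda>f. AE x in M. f x = 0) (\<lambda>f. f \<circ> \<Psi>) 0
      = kernel_pow (OL_space \<phi> w M) (\<lambda>f. AE x in M. f x = 0) (\<lambda>f. f \<circ> \<Psi>) (Suc 0)"
  proof -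
    have "\<And>f. f \<in> OL_space \<phi> w M \<Longrightarrow> (AE x in M. f x = 0) \<longleftrightarrow> (AE x in M. (f \<circ> \<Psi>) x = 0)"
      using key unfolding OL_space_def by auto
    then have "{f \<in> OL_space \<phi> w M. AE x in M. f x = 0} = {f \<in> OL_space \<phi> w M. AE x in M. (f \<circ> \<Psi>) x = 0}"
      by blast
    then show ?thesis unfolding kernel_pow_def by simp
  qed
  show ?thesis unfolding ascent_def using eq
    by (auto intro!: Least_eq_0 simp: zero_enat_def)
qed

end
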